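(* Let $$R=\begin{pmatrix} 1 & -2 \\ 1 & 1 \end{pmatrix}.$$ There exists a driving function $f:[0,\infty)\to\mathbb{R}^2$ for which the Skorokhod problem with matrix $R$ has two distinct solutions $(g,m)$ and $(\overline g,\overline m)$ with $g\neq \overline g$; that is, both satisfy $g(t)=f(t)+Rm(t)$ and $\overline g(t)=f(t)+R\overline m(t)$ for all $t\ge 0$ together with the other conditions of the Skorokhod problem.
   Context: For $b=(b_1,b_2)\in\mathbb{R}^2$ write $b\ge 0$ if $b_1\ge 0$ and $b_2\ge 0$, and let $D=\{b\in\mathbb{R}^2: b\ge 0\}$. A driving function is a continuous function $f:[0,\infty)\to\mathbb{R}^2$ with $f(0)\ge 0$. Given a real $2\times 2$ matrix $R$ and a driving function $f$, a solution of the Skorokhod problem is a pair $(g,m)$ where (1) $g:[0,\infty)\to D$ is continuous; (2) $m=(m_1,m_2):[0,\infty)\to\mathbb{R}^2$ is continuous with $m(0)=0$ and each $m_j$ non-decreasing; (3) $g(t)=f(t)+Rm(t)$ for all $t\ge 0$ (the Skorokhod equation); and (4) for $j=1,2$, $m_j$ increases only when $g_j=0$, i.e. $\int_0^\infty g_j(t)\,dm_j(t)=0$. *)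

theory Defs
  imports "HOL-Analysis.Analysis"
begin

text \<open>Vectors in R^2 are elements of type real^2, components indexed by 1 and 2.
  Functions on [0,oo) are total functions real => real^2 of which only the
  restriction to {0..} matters.\<close>

definition nonneg2 :: "real^2 \<Rightarrow> bool" where
  "nonneg2 b \<longleftrightarrow> b$1 \<ge> 0 \<and> b$2 \<ge> 0"

definition driving_function :: "(real \<Rightarrow> real^2) \<Rightarrow> bool" where
  "driving_function f \<longleftrightarrow> continuous_on {0..} f \<and> nonneg2 (f 0)"

text \<open>Condition (4): the Lebesgue--Stieltjes integral of g_j with respect to dm_j over
  [0,oo) vanishes. The Stieltjes measure of m_j is the interval measure of the
  non-decreasing continuous function t \<mapsto> m_j(max 0 t) (constant on (-oo,0]).\<close>

definition skorokhod_solution ::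
  "real^2^2 \<Rightarrow> (real \<Rightarrow> real^2) \<Rightarrow> (real \<Rightarrow> real^2) \<Rightarrow> (real \<Rightarrow> real^2) \<Rightarrow> bool" where
  "skorokhod_solution R f g m \<longleftrightarrow>
     continuous_on {0..} g \<and> (\<forall>t\<ge>0. nonneg2 (g t)) \<and>
     continuous_on {0..} m \<and> m 0 = 0 \<and>
     (\<forall>j. mono_on {0..} (\<lambda>t. m t $ j)) \<and>
     (\<forall>t\<ge>0. g t = f t + R *v m t) \<and>
     (\<forall>j. (\<integral>\<^sup>+ t. ennreal (g t $ j) * indicator {0..} t
              \<partial>interval_measure (\<lambda>t. m (max 0 t) $ j)) = 0)"

definition R_ex :: "real^2^2" where
  "R_ex = vector [vector [1, -2], vector [1, 1]]"

end

theory Submission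
  imports Defs
begin

definition glue :: "(real \<Rightarrow> 'a::real_vector) \<Rightarrow> real \<Rightarrow> 'a" where
  "glue \<Phi> t = (if t \<le> 0 then 0 else
     (4 powr real_of_int \<lfloor>log 4 t\<rfloor>) *\<^sub>R \<Phi> (t / 4 powr real_of_int \<lfloor>log 4 t\<rfloor>))"

lemma glue_eq:
  fixes n :: int
  assumes P4: "\<Phi> 4 = 4 *\<^sub>R \<Phi> 1" and a: "4 powr n \<le> t" and b: "t \<le> 4 powr (n+1)"
  shows "glue \<Phi> t = 4 powr n *\<^sub>R \<Phi> (t / 4 powr n)"
proof -
  have tpos: "t > 0" using a by (smt (verit) powr_gt_zero)
  show ?thesis
  proof (cases "t < 4 powr (n+1)")
    case True
    then have "\<lfloor>log 4 t\<rfloor> = n" using a tpos by (simp add: floor_log_eq_powr_iff)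
    then show ?thesis using tpos by (simp add: glue_def)
  next
    case False
    then have t: "t = 4 powr (n+1)" using b by simp
    then have "\<lfloor>log 4 t\<rfloor> = n + 1" using tpos by (simp add: floor_log_eq_powr_iff)
    moreover have "t / 4 powr (n+1) = 1" using t by simp
    moreover have "t / 4 powr n = 4" using t by (simp add: powr_add)
    ultimately show ?thesis using tpos P4 t by (simp add: glue_def powr_add)
  qed
qed

lemma glue_decomp:
  assumes "t > 0"
  obtains n :: int and s where "1 \<le> s" "s < 4" "t = 4 powr n * s"
proof -
  define n where "n = \<lfloor>log 4 t\<rfloor>"
  have "4 powr n \<le> t \<and> t < 4 powr (n+1)" using assms floor_log_eq_powr_iff[of t 4 n] unfolding n_def
    by simp
  then have "1 \<le> t / 4 powr n" "t / 4 powr n < 4" "t = 4 powr n * (t / 4 powr n)"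
    by (auto simp: powr_add field_simps)
  then show ?thesis using that by blast
qed

lemma glue_at:
  fixes n :: int
  assumes P4: "\<Phi> 4 = 4 *\<^sub>R \<Phi> 1" and "1 \<le> s" "s \<le> 4"
  shows "glue \<Phi> (4 powr n * s) = 4 powr n *\<^sub>R \<Phi> s"
proof -
  have "glue \<Phi> (4 powr n * s) = 4 powr n *\<^sub>R \<Phi> (4 powr n * s / 4 powr n)"
    using assms by (intro glue_eq) (auto simp: powr_add)
  then show ?thesis by simp
qed

lemma glue_base:
  assumes P4: "\<Phi> 4 = 4 *\<^sub>R \<Phi> 1" and "1 \<le> s" "s \<le> 4"
  shows "glue \<Phi> s = \<Phi> s"
  using glue_at[OF assms, of 0] by simp

lemma glue_scale:
  fixes n :: int
  assumes P4: "\<Phi> 4 = 4 *\<^sub>R \<Phi> 1" and "x > 0"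
  shows "glue \<Phi> (4 powr n * x) = 4 powr n *\<^sub>R glue \<Phi> x"
proof -
  obtain k :: int and s where s: "1 \<le> s" "s < 4" "x = 4 powr k * s" using glue_decomp[OF assms(2)] by blast
  have "glue \<Phi> (4 powr n * x) = glue \<Phi> (4 powr (n+k) * s)" using s by (simp add: powr_add mult.assoc)
  also have "\<dots> = 4 powr (n+k) *\<^sub>R \<Phi> s" using glue_at[OF P4, of s "n+k"] s by simp
  also have "\<dots> = 4 powr n *\<^sub>R glue \<Phi> x" using glue_at[OF P4, of s k] s by (simp add: powr_add)
  finally show ?thesis .
qed

lemma glue_comp: "glue \<Phi> t $ j = glue (\<lambda>s. \<Phi> s $ j) t"
  by (simp add: glue_def)

lemma glue_lin: "glue (\<lambda>s. F s + (R::real^'n^'m) *v M s) t = glue F t + R *v glue M t"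
  by (simp add: glue_def scaleR_add_right matrix_vector_mult_scaleR)

lemma glue_0 [simp]: "glue \<Phi> 0 = 0"
  by (simp add: glue_def)


lemma glue_cont_piece:
  fixes n :: int and \<Phi> :: "real \<Rightarrow> 'a::real_normed_vector"
  assumes P4: "\<Phi> 4 = 4 *\<^sub>R \<Phi> 1" and c: "continuous_on {1..4} \<Phi>"
  shows "continuous_on {4 powr n .. 4 powr (n+1)} (glue \<Phi>)"
proof -
  have c2: "continuous_on {4 powr n .. 4 powr (n+1)} (\<lambda>t. \<Phi> (t / 4 powr n))"
  proof (rule continuous_on_compose2[OF c])
    show "(\<lambda>t. t / 4 powr n) ` {4 powr n .. 4 powr (n+1)} \<subseteq> {1..4}"
      by (auto simp: powr_add field_simps)
  qed (intro continuous_intros, simp)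
  have "continuous_on {4 powr n .. 4 powr (n+1)} (\<lambda>t. 4 powr n *\<^sub>R \<Phi> (t / 4 powr n))"
    using c2 by (intro continuous_on_scaleR continuous_on_const)
  then show ?thesis
    by (rule continuous_on_eq) (use glue_eq[OF P4, of n] in auto)
qed

lemma glue_cont:
  fixes \<Phi> :: "real \<Rightarrow> 'a::real_normed_vector"
  assumes P4: "\<Phi> 4 = 4 *\<^sub>R \<Phi> 1" and c: "continuous_on {1..4} \<Phi>"
  shows "continuous_on {0..} (glue \<Phi>)"
proof -
  have pos: "isCont (glue \<Phi>) t" if t: "t > 0" for t
  proof -
    obtain n :: int and s where s: "1 \<le> s" "s < 4" "t = 4 powr n * s" using glue_decomp[OF t] by blast
    have "continuous_on ({4 powr (n-1) .. 4 powr n} \<union> {4 powr n .. 4 powr (n+1)}) (glue \<Phi>)"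
      using glue_cont_piece[OF P4 c, of "n-1"] glue_cont_piece[OF P4 c, of n]
      by (intro continuous_on_closed_Un) simp_all
    moreover have "{4 powr (n-1) <..< 4 powr (n+1)} \<subseteq> {4 powr (n-1) .. 4 powr n} \<union> {4 powr n .. 4 powr (n+1)}"
      by (auto simp del: powr_minus_divide)
    ultimately have "continuous_on {4 powr (n-1) <..< 4 powr (n+1)} (glue \<Phi>)"
      using continuous_on_subset by blast
    moreover have "t \<in> {4 powr (n-1) <..< 4 powr (n+1)}"
      using s by (auto simp: powr_diff powr_add)
    moreover have "open {4 powr (n-1) <..< 4 powr (n+1)}" by simp
    ultimately show ?thesis using continuous_on_eq_continuous_at by metis
  qed
  have "compact (\<Phi> ` {1..4})" using c by (intro compact_continuous_image) auto
  then obtain B where B': "\<forall>x\<in>\<Phi> ` {1..4}. norm x \<le> B"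
    by (auto dest!: compact_imp_bounded simp: bounded_iff)
  then have B: "\<And>s. s \<in> {1..4} \<Longrightarrow> norm (\<Phi> s) \<le> B" by blast
  have "norm (\<Phi> 1) \<le> B" using B by simp
  then have B0: "B \<ge> 0" by (meson norm_ge_zero order_trans)
  have bnd: "norm (glue \<Phi> t) \<le> B * t" if "t \<ge> 0" for t
  proof (cases "t = 0")
    case False
    then have "t > 0" using that by simp
    then obtain n :: int and s where s: "1 \<le> s" "s < 4" "t = 4 powr n * s" using glue_decomp by blast
    have "norm (glue \<Phi> t) = 4 powr n * norm (\<Phi> s)" using glue_at[OF P4, of s n] s by simp
    also have "\<dots> \<le> 4 powr n * B" using B[of s] s by (intro mult_left_mono) auto
    also have "\<dots> \<le> 4 powr n * (s * B)"
    proof (rule mult_left_mono)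
      show "B \<le> s * B" using mult_right_mono[of 1 s B] s B0 by simp
    qed simp
    also have "\<dots> = B * t" using s by simp
    finally show ?thesis .
  qed simp
  have zero: "continuous (at 0 within {0..}) (glue \<Phi>)"
    unfolding continuous_within_eps_delta
  proof (intro allI impI)
    fix e :: real assume e: "e > 0"
    show "\<exists>d>0. \<forall>x'\<in>{0..}. dist x' 0 < d \<longrightarrow> dist (glue \<Phi> x') (glue \<Phi> 0) < e"
    proof (intro exI[of _ "e / (B+1)"] conjI ballI impI)
      show "e / (B+1) > 0" using e B0 by simp
      fix x' :: real assume x': "x' \<in> {0..}" "dist x' 0 < e / (B+1)"
      then have x'': "x' < e / (B+1)" "x' \<ge> 0" by (auto simp: dist_real_def)
      then have "x' * (B+1) < e" using B0 pos_less_divide_eq[of "B+1" x' e] by simp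
      then have "(B+1) * x' < e" by (simp add: mult.commute)
      moreover have "norm (glue \<Phi> x') \<le> B * x'" using bnd x' by simp
      moreover have "B * x' \<le> (B+1) * x'" using x'' by (simp add: algebra_simps)
      ultimately have "norm (glue \<Phi> x') < e" by linarith
      then show "dist (glue \<Phi> x') (glue \<Phi> 0) < e" by (simp add: dist_norm)
    qed
  qed
  show ?thesis
    unfolding continuous_on_eq_continuous_within
  proof
    fix t :: real assume t: "t \<in> {0..}"
    show "continuous (at t within {0..}) (glue \<Phi>)"
    proof (cases "t = 0")
      case True then show ?thesis using zero by simp
    next
      case False then have "t > 0" using t by simp
      then show ?thesis using pos continuous_at_imp_continuous_at_within by blast
    qed
  qed
qed

lemma glue_mono:
  fixes \<phi> :: "real \<Rightarrow> real"
  assumes P4: "\<phi> 4 = 4 * \<phi> 1" and m: "mono_on {1..4} \<phi>" and p1: "\<phi> 1 \<ge> 0"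
  shows "mono_on {0..} (glue \<phi>)"
proof -
  have P4': "\<phi> 4 = 4 *\<^sub>R \<phi> 1" using P4 by simp
  have low: "4 powr n * \<phi> 1 \<le> glue \<phi> (4 powr n * s)" if "1 \<le> s" "s < 4" for n :: int and s
  proof -
    have "\<phi> 1 \<le> \<phi> s" using that by (intro mono_onD[OF m]) auto
    then have "4 powr n * \<phi> 1 \<le> 4 powr n * \<phi> s" by (simp add: mult_left_mono)
    then show ?thesis using glue_at[OF P4', of s n] that by simp
  qed
  have high: "glue \<phi> (4 powr n * s) \<le> 4 powr (n+1) * \<phi> 1" if "1 \<le> s" "s < 4" for n :: int and s
  proof -
    have "glue \<phi> (4 powr n * s) = 4 powr n * \<phi> s" using glue_at[OF P4', of s n] that by simp
    also have "\<dots> \<le> 4 powr n * \<phi> 4"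
    proof -
      have "\<phi> s \<le> \<phi> 4" using that by (intro mono_onD[OF m]) auto
      then show ?thesis by (simp add: mult_left_mono)
    qed
    finally show ?thesis using P4 by (simp add: powr_add)
  qed
  have nn: "glue \<phi> y \<ge> 0" if yp: "y > 0" for y
  proof -
    obtain n :: int and s where s: "1 \<le> s" "s < 4" "y = 4 powr n * s" using glue_decomp[OF yp] by blast
    have "0 \<le> 4 powr n * \<phi> 1" using p1 by simp
    then show ?thesis using low[OF s(1,2), of n] unfolding s(3) by linarith
  qed
  show ?thesis
  proof (rule mono_onI)
    fix x y :: real assume xy: "x \<in> {0..}" "y \<in> {0..}" "x \<le> y"
    show "glue \<phi> x \<le> glue \<phi> y"
    proof (cases "x = 0")
      case True
      show ?thesis
      proof (cases "y = 0")
        case True then show ?thesis using \<open>x = 0\<close> by simp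
      next
        case False then have "y > 0" using xy by simp
        then show ?thesis using nn[of y] \<open>x = 0\<close> by simp
      qed
    next
      case False
      then have "x > 0" "y > 0" using xy by auto
      obtain a :: int and s where s: "1 \<le> s" "s < 4" "x = 4 powr a * s" using glue_decomp[OF \<open>x > 0\<close>] by blast
      obtain b :: int and u where u: "1 \<le> u" "u < 4" "y = 4 powr b * u" using glue_decomp[OF \<open>y > 0\<close>] by blast
      have "a \<le> b"
      proof (rule ccontr)
        assume "\<not> a \<le> b" then have "b + 1 \<le> a" by simp
        then have "4 powr (b+1) \<le> 4 powr a" by (intro powr_mono) auto
        moreover have "y < 4 powr (b+1)" using u by (simp add: powr_add)
        moreover have "4 powr a \<le> x" using s by simp
        ultimately show False using xy by linarith
      qed
      show ?thesis
      proof (cases "a = b")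
        case True
        then have "4 powr a * s \<le> 4 powr a * u" using s(3) u(3) xy(3) by simp
        then have "s \<le> u" by (simp add: mult_le_cancel_left_pos)
        then have "\<phi> s \<le> \<phi> u" using s u by (intro mono_onD[OF m]) auto
        then have "4 powr a * \<phi> s \<le> 4 powr a * \<phi> u" by (simp add: mult_left_mono)
        then show ?thesis using glue_at[OF P4', of s a] glue_at[OF P4', of u b] s u True by simp
      next
        case False
        then have "a + 1 \<le> b" using \<open>a \<le> b\<close> by simp
        then have "4 powr (a+1) * \<phi> 1 \<le> 4 powr b * \<phi> 1"
          using p1 by (intro mult_right_mono powr_mono) auto
        then show ?thesis using high[OF s(1,2), of a] low[OF u(1,2), of b] s u by simp
      qed
    qed
  qed
qed


lemma stieltjes_zero:
  fixes m h :: "real \<Rightarrow> real"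
  assumes mono: "mono_on {0..} m" and cont: "continuous_on {0..} m"
    and loc: "\<And>t. t \<ge> 0 \<Longrightarrow> h t > 0 \<Longrightarrow> (\<exists>a b. a < t \<and> t < b \<and> m (max 0 a) = m (max 0 b))"
  shows "(\<integral>\<^sup>+ t. ennreal (h t) * indicator {0..} t \<partial>interval_measure (\<lambda>t. m (max 0 t))) = 0"
proof -
  define F where "F = (\<lambda>t. m (max 0 t))"
  have Fmono: "F x \<le> F y" if "x \<le> y" for x y
    unfolding F_def by (rule mono_onD[OF mono]) (use that in \<open>simp_all add: max_def\<close>)
  have Fcont: "continuous_on UNIV F" unfolding F_def
  proof (rule continuous_on_compose2[OF cont])
    show "continuous_on UNIV (\<lambda>t::real. max 0 t)" by (intro continuous_on_max continuous_on_const continuous_on_id)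
    show "(\<lambda>t::real. max 0 t) ` UNIV \<subseteq> {0..}" by auto
  qed
  have Frc: "continuous (at_right a) F" for a
  proof -
    have "isCont F a" using Fcont continuous_on_eq_continuous_at[of UNIV F] by simp
    then show ?thesis by (rule continuous_at_imp_continuous_at_within)
  qed
  define I where "I = {(a,b). a \<in> \<rat> \<and> b \<in> \<rat> \<and> a < b \<and> F a = F b}"
  have cI: "countable I"
  proof (rule countable_subset)
    show "I \<subseteq> \<rat> \<times> \<rat>" unfolding I_def by auto
    show "countable (\<rat> \<times> \<rat>)" by (intro countable_SIGMA countable_rat)
  qed
  have null: "(\<Union>i\<in>I. {fst i<..snd i}) \<in> null_sets (interval_measure F)"
  proof (rule null_sets_UN'[OF cI])
    fix i assume i: "i \<in> I"
    obtain a b where ab: "i = (a,b)" "a < b" "F a = F b" using i unfolding I_def by auto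
    have "emeasure (interval_measure F) {a<..b} = ennreal (F b - F a)"
      using ab(2) Fmono Frc by (intro emeasure_interval_measure_Ioc) simp_all
    then have "emeasure (interval_measure F) {a<..b} = 0" using ab by simp
    then show "{fst i<..snd i} \<in> null_sets (interval_measure F)"
      using ab(1) by (intro null_setsI) simp_all
  qed
  have AE: "AE t in interval_measure F. ennreal (h t) * indicator {0..} t = 0"
  proof (rule AE_I'[OF null], rule subsetI)
    fix t assume "t \<in> {x \<in> space (interval_measure F). \<not> ennreal (h x) * indicator {0..} x = 0}"
    then have t0: "ennreal (h t) * indicator {0..} t \<noteq> 0" by simp
    then have t: "t \<ge> 0" "h t > 0" by (auto simp: indicator_def ennreal_eq_0_iff not_le split: if_splits)
    obtain a b where ab: "a < t" "t < b" "F a = F b" using loc[OF t] unfolding F_def by blast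
    obtain a' where a': "a' \<in> \<rat>" "a < a'" "a' < t" using Rats_dense_in_real[OF ab(1)] by blast
    obtain b' where b': "b' \<in> \<rat>" "t < b'" "b' < b" using Rats_dense_in_real[OF ab(2)] by blast
    have "F a \<le> F a'" using a' by (intro Fmono) simp
    moreover have "F a' \<le> F b'" using a' b' by (intro Fmono) simp
    moreover have "F b' \<le> F b" using b' by (intro Fmono) simp
    ultimately have "F a' = F b'" using ab by simp
    then have "(a', b') \<in> I" using a' b' unfolding I_def by auto
    moreover have "t \<in> {fst (a',b')<..snd (a',b')}" using a' b' by simp
    ultimately show "t \<in> (\<Union>i\<in>I. {fst i<..snd i})" by (rule UN_I)
  qed
  have "(\<integral>\<^sup>+ t. ennreal (h t) * indicator {0..} t \<partial>interval_measure F) = (\<integral>\<^sup>+ t. 0 \<partial>interval_measure F)"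
    by (rule nn_integral_cong_AE[OF AE])
  then show ?thesis unfolding F_def by simp
qed

lemma glue_solution:
  fixes F M :: "real \<Rightarrow> real^2" and R :: "real^2^2"
  defines "G \<equiv> (\<lambda>s. F s + R *v M s)"
  assumes cF: "continuous_on {1..4} F" and cM: "continuous_on {1..4} M"
    and F4: "F 4 = 4 *\<^sub>R F 1" and M4: "M 4 = 4 *\<^sub>R M 1"
    and mM: "\<And>j. mono_on {1..4} (\<lambda>s. M s $ j)" and M1: "\<And>j. M 1 $ j \<ge> 0"
    and nn: "\<And>s. 1 \<le> s \<Longrightarrow> s \<le> 4 \<Longrightarrow> nonneg2 (G s)"
    and loc: "\<And>j s. 1 \<le> s \<Longrightarrow> s < 4 \<Longrightarrow> G s $ j > 0 \<Longrightarrow>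
                 \<exists>a b. 0 < a \<and> a < s \<and> s < b \<and> glue M a $ j = glue M b $ j"
  shows "skorokhod_solution R (glue F) (glue G) (glue M)"
proof -
  have G4: "G 4 = 4 *\<^sub>R G 1" unfolding G_def using F4 M4 by (simp add: scaleR_add_right matrix_vector_mult_scaleR)
  have cG: "continuous_on {1..4} G" unfolding G_def
    using cF cM by (intro continuous_on_add bounded_linear.continuous_on[OF matrix_vector_mul_bounded_linear])
  have gdef: "glue G t = glue F t + R *v glue M t" for t
    unfolding G_def by (rule glue_lin)
  have compM: "(\<lambda>t. glue M t $ j) = glue (\<lambda>s. M s $ j)" for j
    by (rule ext) (rule glue_comp)
  have monoj: "mono_on {0..} (\<lambda>t. glue M t $ j)" for j
    unfolding compM
  proof (rule glue_mono)
    show "M 4 $ j = 4 * M 1 $ j" using M4 by simp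
  qed (use mM M1 in auto)
  have contMj: "continuous_on {0..} (\<lambda>t. glue M t $ j)" for j
    using glue_cont[OF M4 cM] by (intro continuous_intros)
  have nng: "nonneg2 (glue G t)" if "t \<ge> 0" for t
  proof (cases "t = 0")
    case True then show ?thesis by (simp add: nonneg2_def)
  next
    case False
    then have "t > 0" using that by simp
    then obtain n :: int and s where s: "1 \<le> s" "s < 4" "t = 4 powr n * s" using glue_decomp by blast
    have "glue G t = 4 powr n *\<^sub>R G s" using glue_at[OF G4, of s n] s by simp
    then show ?thesis using nn[of s] s unfolding nonneg2_def by simp
  qed
  have integ: "(\<integral>\<^sup>+ t. ennreal (glue G t $ j) * indicator {0..} t
              \<partial>interval_measure (\<lambda>t. glue M (max 0 t) $ j)) = 0" for j
  proof (rule stieltjes_zero[OF monoj contMj])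
    fix t :: real assume t: "t \<ge> 0" "glue G t $ j > 0"
    then have "t \<noteq> 0" by auto
    then have "t > 0" using t by simp
    then obtain n :: int and s where s: "1 \<le> s" "s < 4" "t = 4 powr n * s" using glue_decomp by blast
    have "glue G t = 4 powr n *\<^sub>R G s" using glue_at[OF G4, of s n] s by simp
    then have "G s $ j > 0" using t by (simp add: zero_less_mult_iff)
    then obtain a b where ab: "0 < a" "a < s" "s < b" "glue M a $ j = glue M b $ j"
      using loc[OF s(1,2)] by blast
    have "glue M (4 powr n * a) = 4 powr n *\<^sub>R glue M a" using glue_scale[OF M4 ab(1)] .
    moreover have "glue M (4 powr n * b) = 4 powr n *\<^sub>R glue M b" using glue_scale[OF M4] ab by simp
    ultimately have "glue M (max 0 (4 powr n * a)) $ j = glue M (max 0 (4 powr n * b)) $ j"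
      using ab by simp
    moreover have "4 powr n * a < t" using s(3) ab(2) by simp
    moreover have "t < 4 powr n * b" using s(3) ab(3) by simp
    ultimately show "\<exists>a b. a < t \<and> t < b \<and> glue M (max 0 a) $ j = glue M (max 0 b) $ j" by blast
  qed
  have "glue M 0 = 0" by simp
  then show ?thesis
    unfolding skorokhod_solution_def
    using glue_cont[OF G4 cG] glue_cont[OF M4 cM] nng monoj gdef integ by blast
qed


definition ramp :: "real \<Rightarrow> real \<Rightarrow> real \<Rightarrow> real" where
  "ramp a b s = max a (min b s) - a"

lemma ramp_mono: "x \<le> y \<Longrightarrow> ramp a b x \<le> ramp a b y"
  unfolding ramp_def by (simp add: max_def min_def)

lemma ramp_cont: "continuous_on S (ramp a b)"
  unfolding ramp_def by (intro continuous_intros)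

definition e1 :: "real^2" where "e1 = vector [1, 0]"
definition e2 :: "real^2" where "e2 = vector [0, 1]"

lemma e_comp [simp]: "e1 $ 1 = 1" "e1 $ 2 = 0" "e2 $ 1 = 0" "e2 $ 2 = 1"
  by (simp_all add: e1_def e2_def)

definition Fp :: "real \<Rightarrow> real^2" where
  "Fp s = (12 * ramp 1 (3/2) s - 12 * ramp (3/2) 2 s + 12 * ramp 2 3 s - 12 * ramp 3 4 s) *\<^sub>R e1
        + (-3 - 6 * ramp 1 (3/2) s - 6 * ramp 2 3 s) *\<^sub>R e2"

definition Mp :: "real \<Rightarrow> real^2" where
  "Mp s = (2 + 12 * ramp (3/2) 2 s) *\<^sub>R e1 + (1 + 6 * ramp 1 (3/2) s) *\<^sub>R e2"

definition Np :: "real \<Rightarrow> real^2" where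
  "Np s = (4 + 12 * ramp 3 4 s) *\<^sub>R e1 + (2 + 6 * ramp 2 3 s) *\<^sub>R e2"

lemma Rv: "R_ex *v x = (x$1 - 2 * x$2) *\<^sub>R e1 + (x$1 + x$2) *\<^sub>R e2"
  unfolding R_ex_def
  by (simp add: vec_eq_iff forall_2 matrix_vector_mult_def sum_2)

lemma comp1: "(a *\<^sub>R e1 + b *\<^sub>R e2) $ 1 = a" and comp2: "(a *\<^sub>R e1 + b *\<^sub>R e2) $ 2 = b"
  by simp_all

lemma F4: "Fp 4 = 4 *\<^sub>R Fp 1" unfolding Fp_def ramp_def by (simp add: vec_eq_iff forall_2)
lemma M4: "Mp 4 = 4 *\<^sub>R Mp 1" unfolding Mp_def ramp_def by (simp add: vec_eq_iff forall_2)
lemma N4: "Np 4 = 4 *\<^sub>R Np 1" unfolding Np_def ramp_def by (simp add: vec_eq_iff forall_2)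

lemma cF: "continuous_on {1..4} Fp" unfolding Fp_def
  by (intro continuous_intros ramp_cont)
lemma cM: "continuous_on {1..4} Mp" unfolding Mp_def
  by (intro continuous_intros ramp_cont)
lemma cN: "continuous_on {1..4} Np" unfolding Np_def
  by (intro continuous_intros ramp_cont)

lemma j2: "(j::2) = 1 \<or> j = 2" by (rule exhaust_2)

lemma monoM: "mono_on {1..4} (\<lambda>s. Mp s $ j)"
proof (rule mono_onI)
  fix x y :: real assume "x \<in> {1..4}" "y \<in> {1..4}" "x \<le> y"
  then show "Mp x $ j \<le> Mp y $ j"
    using j2[of j] ramp_mono[of x y] unfolding Mp_def by (auto intro: ramp_mono)
qed

lemma monoN: "mono_on {1..4} (\<lambda>s. Np s $ j)"
proof (rule mono_onI)
  fix x y :: real assume "x \<in> {1..4}" "y \<in> {1..4}" "x \<le> y"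
  then show "Np x $ j \<le> Np y $ j"
    using j2[of j] ramp_mono[of x y] unfolding Np_def by (auto intro: ramp_mono)
qed

lemma M1: "Mp 1 $ j \<ge> 0" using j2[of j] unfolding Mp_def ramp_def by auto
lemma N1: "Np 1 $ j \<ge> 0" using j2[of j] unfolding Np_def ramp_def by auto

lemma G1_1: "(Fp s + R_ex *v Mp s) $ 1 = (if s \<le> 2 then 0 else if s \<le> 3 then 12* s - 24 else 48 - 12* s)"
  if "1 \<le> s" "s \<le> 4"
  using that unfolding Rv Fp_def Mp_def ramp_def by (simp add: max_def min_def)

lemma G1_2: "(Fp s + R_ex *v Mp s) $ 2 = (if s \<le> 3/2 then 0 else if s \<le> 2 then 12* s - 18 else if s \<le> 3 then 18 - 6* s else 0)"
  if "1 \<le> s" "s \<le> 4"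
  using that unfolding Rv Fp_def Mp_def ramp_def by (simp add: max_def min_def)

lemma G2_1: "(Fp s + R_ex *v Np s) $ 1 = (if s \<le> 3/2 then 12* s - 12 else if s \<le> 2 then 24 - 12* s else 0)"
  if "1 \<le> s" "s \<le> 4"
  using that unfolding Rv Fp_def Np_def ramp_def by (simp add: max_def min_def)

lemma G2_2: "(Fp s + R_ex *v Np s) $ 2 = (if s \<le> 3/2 then 9 - 6* s else if s \<le> 3 then 0 else 12* s - 36)"
  if "1 \<le> s" "s \<le> 4"
  using that unfolding Rv Fp_def Np_def ramp_def by (simp add: max_def min_def)


lemma glue_one: "glue \<Phi> 1 = \<Phi> 1" by (simp add: glue_def)

lemma eqM: "1 \<le> a \<Longrightarrow> a \<le> 4 \<Longrightarrow> 1 \<le> b \<Longrightarrow> b \<le> 4 \<Longrightarrow> Mp a $ j = Mp b $ j \<Longrightarrow> glue Mp a $ j = glue Mp b $ j"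
  using glue_base[OF M4, of a] glue_base[OF M4, of b] by simp

lemma eqN: "1 \<le> a \<Longrightarrow> a \<le> 4 \<Longrightarrow> 1 \<le> b \<Longrightarrow> b \<le> 4 \<Longrightarrow> Np a $ j = Np b $ j \<Longrightarrow> glue Np a $ j = glue Np b $ j"
  using glue_base[OF N4, of a] glue_base[OF N4, of b] by simp

lemma loc1:
  assumes s: "1 \<le> s" "s < 4" and pos: "(Fp s + R_ex *v Mp s) $ j > 0"
  shows "\<exists>a b. 0 < a \<and> a < s \<and> s < b \<and> glue Mp a $ j = glue Mp b $ j"
proof (cases "j = 1")
  case True
  then have "s > 2" using pos G1_1[of s] s by (auto split: if_splits)
  moreover have "glue Mp 2 $ j = glue Mp 4 $ j"
    using True by (intro eqM) (simp_all add: Mp_def ramp_def)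
  ultimately show ?thesis using s by (intro exI[of _ 2] exI[of _ 4]) auto
next
  case False
  then have j: "j = 2" using j2[of j] by simp
  then have "s > 3/2" using pos G1_2[of s] s by (auto split: if_splits)
  moreover have "glue Mp (3/2) $ j = glue Mp 4 $ j"
    using j by (intro eqM) (simp_all add: Mp_def ramp_def)
  ultimately show ?thesis using s by (intro exI[of _ "3/2"] exI[of _ 4]) auto
qed

lemma loc2:
  assumes s: "1 \<le> s" "s < 4" and pos: "(Fp s + R_ex *v Np s) $ j > 0"
  shows "\<exists>a b. 0 < a \<and> a < s \<and> s < b \<and> glue Np a $ j = glue Np b $ j"
proof (cases "j = 1")
  case True
  then have "s > 1" "s < 2" using pos G2_1[of s] s by (auto split: if_splits)
  moreover have "glue Np 1 $ j = glue Np 3 $ j"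
    using True by (intro eqN) (simp_all add: Np_def ramp_def)
  ultimately show ?thesis using s by (intro exI[of _ 1] exI[of _ 3]) auto
next
  case False
  then have j: "j = 2" using j2[of j] by simp
  then have "s < 3/2 \<or> s > 3" using pos G2_2[of s] s by (auto split: if_splits)
  then show ?thesis
  proof
    assume s3: "s > 3"
    have "glue Np 3 $ j = glue Np 4 $ j"
      using j by (intro eqN) (simp_all add: Np_def ramp_def)
    then show ?thesis using s s3 by (intro exI[of _ 3] exI[of _ 4]) auto
  next
    assume s32: "s < 3/2"
    show ?thesis
    proof (cases "s = 1")
      case False
      have "glue Np 1 $ j = glue Np 2 $ j"
        using j by (intro eqN) (simp_all add: Np_def ramp_def)
      then show ?thesis using s s32 False by (intro exI[of _ 1] exI[of _ 2]) auto
    next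
      case True
      have q: "4 powr real_of_int (-1) * 3 = (3/4::real)" by (simp add: powr_minus)
      have "glue Np (3/4) = 4 powr real_of_int (-1) *\<^sub>R Np 3"
        using glue_at[OF N4, of 3 "-1"] unfolding q by simp
      moreover have "glue Np 2 = Np 2" by (rule glue_base[OF N4]) auto
      moreover have "Np 3 $ j = 8" "Np 2 $ j = 2" using j by (simp_all add: Np_def ramp_def)
      ultimately have "glue Np (3/4) $ j = glue Np 2 $ j" by (simp add: powr_minus)
      then show ?thesis using True by (intro exI[of _ "3/4"] exI[of _ 2]) auto
    qed
  qed
qed

lemma nn1: "1 \<le> s \<Longrightarrow> s \<le> 4 \<Longrightarrow> nonneg2 (Fp s + R_ex *v Mp s)"
  unfolding nonneg2_def using G1_1[of s] G1_2[of s] by auto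

lemma nn2: "1 \<le> s \<Longrightarrow> s \<le> 4 \<Longrightarrow> nonneg2 (Fp s + R_ex *v Np s)"
  unfolding nonneg2_def using G2_1[of s] G2_2[of s] by auto

theorem theorem2p1:
  shows "\<exists>f g m g' m'. driving_function f \<and>
           skorokhod_solution R_ex f g m \<and> skorokhod_solution R_ex f g' m' \<and>
           (\<exists>t\<ge>0. g t \<noteq> g' t)"
proof -
  have S1: "skorokhod_solution R_ex (glue Fp) (glue (\<lambda>s. Fp s + R_ex *v Mp s)) (glue Mp)"
    by (rule glue_solution[OF cF cM F4 M4 monoM M1 nn1 loc1])
  have S2: "skorokhod_solution R_ex (glue Fp) (glue (\<lambda>s. Fp s + R_ex *v Np s)) (glue Np)"
    by (rule glue_solution[OF cF cN F4 N4 monoN N1 nn2 loc2])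
  have D: "driving_function (glue Fp)"
    unfolding driving_function_def using glue_cont[OF F4 cF] by (simp add: nonneg2_def)
  have "glue (\<lambda>s. Fp s + R_ex *v Mp s) 1 $ 2 = 0" using G1_2[of 1] by (simp add: glue_one)
  moreover have "glue (\<lambda>s. Fp s + R_ex *v Np s) 1 $ 2 = 3" using G2_2[of 1] by (simp add: glue_one)
  ultimately have "glue (\<lambda>s. Fp s + R_ex *v Mp s) 1 \<noteq> glue (\<lambda>s. Fp s + R_ex *v Np s) 1" by auto
  then show ?thesis using S1 S2 D by (intro exI conjI exI[of _ 1]) (auto)
qed

end
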